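(* Consider the miners' game with $n$ miners $s_1,\dots,s_n$, parameters $R>0$, $N>0$, unit prices $\lambda_1,\dots,\lambda_n>0$, where miner $s_i$ chooses $\mu_i\ge0$ and receives profit $P_i=\frac{\mu_i}{\sum_{j=1}^n\mu_j}RN-\lambda_i\mu_i$ (the fraction being $0$ if $\sum_j\mu_j=0$). Let $q$ be the number of miners with a nonzero strategy in a Nash equilibrium of this game. Then $q\ge 2$.
   Context: A Nash equilibrium is a profile $(\mu_1^*,\dots,\mu_n^* )$ with all $\mu_i^*\ge 0$ such that no miner $s_i$ can strictly increase $P_i$ by unilaterally changing $\mu_i^*$ to another value $\mu_i\ge0$. *)

theory Defs
  imports Complex_Main
begin

text \<open>Miners are indexed by 1..n; a strategy profile is mu :: nat => real
  (values outside 1..n are irrelevant). Profit of miner i.\<close>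
definition miner_profit ::
  "nat \<Rightarrow> real \<Rightarrow> real \<Rightarrow> (nat \<Rightarrow> real) \<Rightarrow> (nat \<Rightarrow> real) \<Rightarrow> nat \<Rightarrow> real" where
  "miner_profit n R N lam mu i =
     (if (\<Sum>j=1..n. mu j) = 0 then 0 else mu i / (\<Sum>j=1..n. mu j) * R * N) - lam i * mu i"

definition miners_nash_eq ::
  "nat \<Rightarrow> real \<Rightarrow> real \<Rightarrow> (nat \<Rightarrow> real) \<Rightarrow> (nat \<Rightarrow> real) \<Rightarrow> bool" where
  "miners_nash_eq n R N lam mu \<longleftrightarrow>
     (\<forall>i\<in>{1..n}. mu i \<ge> 0) \<and>
     (\<forall>i\<in>{1..n}. \<forall>m::real. m \<ge> 0 \<longrightarrow>
        \<not> (miner_profit n R N lam (mu(i := m)) i > miner_profit n R N lam mu i))"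

end

theory Submission
  imports Defs
begin

lemma sum_single:
  fixes n k :: nat and mu :: "nat \<Rightarrow> real"
  assumes "k \<in> {1..n}" and "\<forall>j\<in>{1..n}. j \<noteq> k \<longrightarrow> mu j = 0"
  shows "(\<Sum>j=1..n. (mu(k := m)) j) = (m::real)"
proof -
  have "(\<Sum>j=1..n. (mu(k := m)) j) = (\<Sum>j=1..n. if j = k then m else 0)"
    using assms(2) by (intro sum.cong) auto
  also have "\<dots> = m" using assms(1) by (subst sum.delta) auto
  finally show ?thesis .
qed

lemma no_single:
  fixes n k :: nat and mu lam :: "nat \<Rightarrow> real" and R N :: real
  assumes "R > 0" and "N > 0" and "lam k > 0" and "k \<in> {1..n}"
    and "\<forall>j\<in>{1..n}. j \<noteq> k \<longrightarrow> mu j = 0"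
    and ne: "miners_nash_eq n R N lam mu"
  shows False
proof -
  have pos: "mu k \<ge> 0" using ne assms(4) unfolding miners_nash_eq_def by auto
  have dev: "\<And>m. m \<ge> 0 \<Longrightarrow> \<not> miner_profit n R N lam (mu(k := m)) k > miner_profit n R N lam mu k"
    using ne assms(4) unfolding miners_nash_eq_def by auto
  have S: "\<And>m. (\<Sum>j=1..n. (mu(k := m)) j) = m" using sum_single[OF assms(4) assms(5)] by blast
  have S0: "(\<Sum>j=1..n. mu j) = mu k" using S[of "mu k"] by simp
  have RN: "R * N > 0" using assms by simp
  show False
  proof (cases "mu k = 0")
    case True
    define m where "m = R * N / (2 * lam k)"
    have m: "m > 0" using RN assms(3) by (simp add: m_def)
    have "miner_profit n R N lam (mu(k := m)) k = R * N - lam k * m"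
      using m S[of m] by (simp add: miner_profit_def)
    also have "\<dots> = R * N / 2" using assms(3) by (simp add: m_def field_simps)
    finally have "miner_profit n R N lam (mu(k := m)) k > miner_profit n R N lam mu k"
      using True S0 RN by (simp add: miner_profit_def)
    with dev[of m] m show False by simp
  next
    case False
    define m where "m = mu k / 2"
    have m: "m > 0" using pos False by (simp add: m_def)
    have "miner_profit n R N lam (mu(k := m)) k = R * N - lam k * m"
      using m S[of m] by (simp add: miner_profit_def)
    moreover have "miner_profit n R N lam mu k = R * N - lam k * mu k"
      using False S0 by (simp add: miner_profit_def)
    moreover have "lam k * m < lam k * mu k" using assms(3) m by (simp add: m_def)
    ultimately have "miner_profit n R N lam (mu(k := m)) k > miner_profit n R N lam mu k" by simp
    with dev[of m] m show False by simp
  qed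
qed

theorem corollary2:
  fixes n :: nat and R N :: real and lam mu :: "nat \<Rightarrow> real"
  assumes "n \<ge> 1" and "R > 0" and "N > 0"
    and "\<forall>i\<in>{1..n}. lam i > 0"
    and "miners_nash_eq n R N lam mu"
  shows "card {i\<in>{1..n}. mu i \<noteq> 0} \<ge> 2"
proof (rule ccontr)
  let ?A = "{i\<in>{1..n}. mu i \<noteq> 0}"
  assume "\<not> 2 \<le> card ?A"
  hence c: "card ?A = 0 \<or> card ?A = 1" by linarith
  have fin: "finite ?A" by simp
  show False
  proof (cases "card ?A = 0")
    case True
    hence "?A = {}" using fin by simp
    hence z: "\<forall>j\<in>{1..n}. j \<noteq> 1 \<longrightarrow> mu j = 0" by blast
    have kn: "(1::nat) \<in> {1..n}" using assms(1) by simp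
    have lk: "lam 1 > 0" using assms(4) kn by blast
    show False using no_single[OF assms(2) assms(3) lk kn z assms(5)] .
  next
    case False
    with c obtain k where k: "?A = {k}" by (auto simp: card_Suc_eq)
    have k1: "k \<in> ?A" using k by blast
    hence kn: "k \<in> {1..n}" by blast
    have z: "\<forall>j\<in>{1..n}. j \<noteq> k \<longrightarrow> mu j = 0"
    proof (intro ballI impI)
      fix j assume j: "j \<in> {1..n}" "j \<noteq> k"
      have "j \<notin> ?A" using k j(2) by blast
      with j(1) show "mu j = 0" by blast
    qed
    have lk: "lam k > 0" using assms(4) kn by blast
    show False using no_single[OF assms(2) assms(3) lk kn z assms(5)] .
  qed
qed

end
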